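(* Under the standing assumptions, suppose that $\operatorname{epi}(f-g+\delta_A)^c\cap B^*=\Lambda\cap B^*$. Then the following are equivalent: (i) stable strong duality holds for $(P)-(D^F)$; (ii) stable strong duality holds for $(P)-(\bar D^F)$ and $\Omega\cap B^*=K\cap B^*$.
   Context: Let $X$ be a nontrivial separated locally convex space with topological dual $X^*$, endowed with the topology $\sigma(X,X^* )$; $\langle x,x^*\rangle$ is the value of $x^*\in X^*$ at $x\in X$. Put $W:=X^*\times X^*\times\mathbb{R}$, $\mathbb{R}_{++}:=]0,+\infty[$ and $Z:=X^*\times X^*\times\mathbb{R}_{++}$. For $y^*\in X^*$, $\alpha\in\mathbb{R}$, let $H^-_{y^*,\alpha}:=\{x\in X:\langle x,y^*\rangle<\alpha\}$. The coupling function $c:X\times W\to\overline{\mathbb{R}}$ is $c(x,(x^*,y^*,\alpha)):=\langle x,x^*\rangle$ if $\langle x,y^*\rangle<\alpha$ and $:=+\infty$ otherwise. For $h:X\to\overline{\mathbb{R}}$ its $c$-conjugate is $h^c:W\to\overline{\mathbb{R}}$, $h^c(w):=\sup_{x\in X}\{c(x,w)-h(x)\}$, with the convention $(+\infty)+(-\infty)=(-\infty)+(+\infty)=(+\infty)-(+\infty)=(-\infty)-(-\infty)=-\infty$ (so for proper $h$, $h^c(x^*,y^*,\alpha)=h^*(x^* )$ if $\operatorname{dom}h\subseteq H^-_{y^*,\alpha}$ and $+\infty$ otherwise). Epigraphs of functions on $W$ are subsets of $W\times\mathbb{R}$. $\delta_A$ is the indicator function of $A$. For $E\subseteq W\times\mathbb{R}$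 and $e\in W\times\mathbb{R}$, $E-e:=\{z-e:z\in E\}$. Standing assumptions: $f,g:X\to\overline{\mathbb{R}}$ proper convex with $\operatorname{dom}f\subseteq\operatorname{dom}g$, $A\subseteq X$ nonempty, convention $(+\infty)-(+\infty)=+\infty$ in $f-g$. The primal $(P)$ is $\inf_{x\in A}\{f(x)-g(x)\}$. For $p^*\in X^*$: $(P_{p^*})$ is $\inf_{x\in A}\{f(x)-g(x)+\langle x,p^*\rangle\}$ with value $v(P_{p^*})$; with $\varphi_{p^*}(u^*,v^*,\gamma;x^*,y^*,\alpha):=g^c(u^*,v^*,\gamma)-f^c(u^*-x^*-p^*,-y^*,\alpha)-\delta_A^c(x^*,y^*,\alpha)$, the duals are $v(D^F_{p^*}):=\sup_{(x^*,y^*,\alpha)\in Z}\inf_{(u^*,v^*,\gamma)\in\operatorname{dom}g^c}\varphi_{p^*}$ and $v(\bar D^F_{p^*}):=\inf_{(u^*,v^*,\gamma)\in\operatorname{dom}g^c}\sup_{(x^*,y^*,\alpha)\in Z}\varphi_{p^*}$; $(D^F)$ and $(\bar D^F)$ are the cases $p^*=0$. Strong duality for $(P_{p^*})-(D^F_{p^*})$ means $v(P_{p^*})=v(D^F_{p^*})$ and there is $(\bar x^*,\bar y^*,\bar\alpha)\in\operatorname{dom}\delta_A^c$ with $\varphi_{p^*}(u^*,v^*,\gamma;\bar x^*,\bar y^*,\bar\alpha)\ge v(D^F_{p^*})$ for all $(u^*,v^*,\gamma)\in\operatorname{dom}g^c$. Strong duality for $(P_{p^*})-(\bar D^F_{p^*})$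 means $v(P_{p^*})=v(\bar D^F_{p^*})$ and for every $(u^*,v^*,\gamma)\in\operatorname{dom}g^c$ there is $(x^*,y^*,\alpha)\in\operatorname{dom}\delta_A^c$ with $\varphi_{p^*}(u^*,v^*,\gamma;x^*,y^*,\alpha)\ge v(\bar D^F_{p^*})$. Stable strong duality for $(P)-(D^F)$ (resp. $(P)-(\bar D^F)$) means strong duality for $(P_{p^*})-(D^F_{p^*})$ (resp. $(P_{p^*})-(\bar D^F_{p^*})$) for every $p^*\in X^*$. Sets: $B^*:=X^*\times\{0\}\times\mathbb{R}_{++}\times\mathbb{R}\subseteq W\times\mathbb{R}$; $\Lambda:=\bigcap_{(u^*,v^*,\gamma)\in\operatorname{dom}g^c}\Big[\operatorname{epi}(f+\delta_A)^c-\big(u^*,0,0,g^c(u^*,v^*,\gamma)\big)\Big]$; $\Omega:=\bigcup_{(x^*,y^*,\alpha)\in\operatorname{dom}\delta_A^c}\ \bigcap_{(u^*,v^*,\gamma)\in\operatorname{dom}g^c}\Big[\operatorname{epi}\big(f-c(\cdot,(-x^*,-y^*,\alpha))\big)^c-\big(u^*,0,0,g^c(u^*,v^*,\gamma)-\delta_A^c(x^*,y^*,\alpha)\big)\Big]$, $K:=\bigcap_{(u^*,v^*,\gamma)\in\operatorname{dom}g^c}\ \bigcup_{(x^*,y^*,\alpha)\in\operatorname{dom}\delta_A^c}\Big[\operatorname{epi}\big(f-c(\cdot,(-x^*,-y^*,\alpha))\big)^c-\big(u^*,0,0,g^c(u^*,v^*,\gamma)-\delta_A^c(x^*,y^*,\alpha)\big)\Big]$.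 *)

theory Defs
  imports "HOL-Analysis.Analysis"
begin

text \<open>The dual X* of the separated locally convex space X (with sigma(X,X*)) is modelled
  as a set D of linear functionals on X that is a linear subspace of the algebraic dual
  and separates the points of X.\<close>

type_synonym 'x wsp = "('x \<Rightarrow> real) \<times> ('x \<Rightarrow> real) \<times> real"

definition dual_space :: "('x::real_vector \<Rightarrow> real) set \<Rightarrow> bool" where
  "dual_space D \<longleftrightarrow> (\<forall>l\<in>D. linear l) \<and> (\<lambda>_. 0) \<in> D \<and>
     (\<forall>l\<in>D. \<forall>m\<in>D. (\<lambda>x. l x + m x) \<in> D) \<and> (\<forall>l\<in>D. \<forall>t::real. (\<lambda>x. t * l x) \<in> D) \<and>
     (\<forall>x. x \<noteq> 0 \<longrightarrow> (\<exists>l\<in>D. l x \<noteq> 0))"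

definition Wsp :: "('x \<Rightarrow> real) set \<Rightarrow> 'x wsp set" where
  "Wsp D = D \<times> D \<times> UNIV"

definition Zsp :: "('x \<Rightarrow> real) set \<Rightarrow> 'x wsp set" where
  "Zsp D = D \<times> D \<times> {0<..}"

definition cpl :: "'x \<Rightarrow> 'x wsp \<Rightarrow> ereal" where
  "cpl x w = (case w of (xs, ys, a) \<Rightarrow> if ys x < a then ereal (xs x) else \<infinity>)"

text \<open>Subtraction with the convention (+oo)-(+oo) = (-oo)-(-oo) = -oo used in c-conjugates.\<close>
definition lminus :: "ereal \<Rightarrow> ereal \<Rightarrow> ereal" where
  "lminus a b = (if (a = \<infinity> \<and> b = \<infinity>) \<or> (a = -\<infinity> \<and> b = -\<infinity>) then -\<infinity> else a - b)"

definition cconj :: "('x \<Rightarrow> ereal) \<Rightarrow> 'x wsp \<Rightarrow> ereal" where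
  "cconj h w = (SUP x. lminus (cpl x w) (h x))"

definition indf :: "'x set \<Rightarrow> 'x \<Rightarrow> ereal" where
  "indf A x = (if x \<in> A then 0 else \<infinity>)"

definition edom :: "('x \<Rightarrow> real) set \<Rightarrow> ('x wsp \<Rightarrow> ereal) \<Rightarrow> 'x wsp set" where
  "edom D F = {w \<in> Wsp D. F w < \<infinity>}"

definition epiW :: "('x \<Rightarrow> real) set \<Rightarrow> ('x wsp \<Rightarrow> ereal) \<Rightarrow> ('x wsp \<times> real) set" where
  "epiW D F = {(w, r). w \<in> Wsp D \<and> F w \<le> ereal r}"

definition shiftW :: "('x wsp \<times> real) set \<Rightarrow> 'x wsp \<times> real \<Rightarrow> ('x wsp \<times> real) set" where
  "shiftW E e = (\<lambda>z. case z of ((a, b, c), r) \<Rightarrow> case e of ((a', b', c'), r') \<Rightarrow>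
      ((a - a', b - b', c - c'), r - r')) ` E"

definition Bstar :: "('x \<Rightarrow> real) set \<Rightarrow> ('x wsp \<times> real) set" where
  "Bstar D = {((xs, ys, a), r). xs \<in> D \<and> ys = (\<lambda>_. 0) \<and> a > 0}"

definition proper_fun :: "('x \<Rightarrow> ereal) \<Rightarrow> bool" where
  "proper_fun h \<longleftrightarrow> (\<forall>x. h x \<noteq> -\<infinity>) \<and> (\<exists>x. h x \<noteq> \<infinity>)"

definition convex_fun :: "('x::real_vector \<Rightarrow> ereal) \<Rightarrow> bool" where
  "convex_fun h \<longleftrightarrow> convex {(x, r::real). h x \<le> ereal r}"

text \<open>Primal value of (P_p).  f - g uses Isabelle's ereal minus, for which (+oo)-(+oo)=+oo.\<close>
definition vP :: "('x \<Rightarrow> ereal) \<Rightarrow> ('x \<Rightarrow> ereal) \<Rightarrow> 'x set \<Rightarrow> ('x \<Rightarrow> real) \<Rightarrow> ereal" where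
  "vP f g A p = (INF x\<in>A. f x - g x + ereal (p x))"

definition phi :: "('x \<Rightarrow> ereal) \<Rightarrow> ('x \<Rightarrow> ereal) \<Rightarrow> 'x set \<Rightarrow> ('x \<Rightarrow> real) \<Rightarrow> 'x wsp \<Rightarrow> 'x wsp \<Rightarrow> ereal" where
  "phi f g A p w z = (case w of (u, v, \<gamma>) \<Rightarrow> case z of (xs, ys, a) \<Rightarrow>
      cconj g (u, v, \<gamma>) - cconj f (u - xs - p, - ys, a) - cconj (indf A) (xs, ys, a))"

definition vD :: "('x \<Rightarrow> real) set \<Rightarrow> ('x \<Rightarrow> ereal) \<Rightarrow> ('x \<Rightarrow> ereal) \<Rightarrow> 'x set \<Rightarrow> ('x \<Rightarrow> real) \<Rightarrow> ereal" where
  "vD D f g A p = (SUP z\<in>Zsp D. INF w\<in>edom D (cconj g). phi f g A p w z)"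

definition vDbar :: "('x \<Rightarrow> real) set \<Rightarrow> ('x \<Rightarrow> ereal) \<Rightarrow> ('x \<Rightarrow> ereal) \<Rightarrow> 'x set \<Rightarrow> ('x \<Rightarrow> real) \<Rightarrow> ereal" where
  "vDbar D f g A p = (INF w\<in>edom D (cconj g). SUP z\<in>Zsp D. phi f g A p w z)"

definition strong_D :: "('x \<Rightarrow> real) set \<Rightarrow> ('x \<Rightarrow> ereal) \<Rightarrow> ('x \<Rightarrow> ereal) \<Rightarrow> 'x set \<Rightarrow> ('x \<Rightarrow> real) \<Rightarrow> bool" where
  "strong_D D f g A p \<longleftrightarrow> vP f g A p = vD D f g A p \<and>
     (\<exists>z\<in>edom D (cconj (indf A)). \<forall>w\<in>edom D (cconj g). phi f g A p w z \<ge> vD D f g A p)"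

definition strong_Dbar :: "('x \<Rightarrow> real) set \<Rightarrow> ('x \<Rightarrow> ereal) \<Rightarrow> ('x \<Rightarrow> ereal) \<Rightarrow> 'x set \<Rightarrow> ('x \<Rightarrow> real) \<Rightarrow> bool" where
  "strong_Dbar D f g A p \<longleftrightarrow> vP f g A p = vDbar D f g A p \<and>
     (\<forall>w\<in>edom D (cconj g). \<exists>z\<in>edom D (cconj (indf A)). phi f g A p w z \<ge> vDbar D f g A p)"

definition stable_D where "stable_D D f g A \<longleftrightarrow> (\<forall>p\<in>D. strong_D D f g A p)"
definition stable_Dbar where "stable_Dbar D f g A \<longleftrightarrow> (\<forall>p\<in>D. strong_Dbar D f g A p)"

text \<open>The sets Lambda, Omega, K.  On dom g^c and dom delta_A^c the subtracted values are finite
  (f, g proper, A nonempty), so real_of_ereal is exact there.\<close>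
definition LambdaS :: "('x \<Rightarrow> real) set \<Rightarrow> ('x \<Rightarrow> ereal) \<Rightarrow> ('x \<Rightarrow> ereal) \<Rightarrow> 'x set \<Rightarrow> ('x wsp \<times> real) set" where
  "LambdaS D f g A = (\<Inter>w\<in>edom D (cconj g). case w of (u, v, \<gamma>) \<Rightarrow>
     shiftW (epiW D (cconj (\<lambda>x. f x + indf A x))) ((u, \<lambda>_. 0, 0), real_of_ereal (cconj g (u, v, \<gamma>))))"

definition OmegaS :: "('x \<Rightarrow> real) set \<Rightarrow> ('x \<Rightarrow> ereal) \<Rightarrow> ('x \<Rightarrow> ereal) \<Rightarrow> 'x set \<Rightarrow> ('x wsp \<times> real) set" where
  "OmegaS D f g A = (\<Union>z\<in>edom D (cconj (indf A)). \<Inter>w\<in>edom D (cconj g).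
     case z of (xs, ys, a) \<Rightarrow> case w of (u, v, \<gamma>) \<Rightarrow>
     shiftW (epiW D (cconj (\<lambda>x. f x - cpl x (- xs, - ys, a))))
       ((u, \<lambda>_. 0, 0), real_of_ereal (cconj g (u, v, \<gamma>) - cconj (indf A) (xs, ys, a))))"

definition KS :: "('x \<Rightarrow> real) set \<Rightarrow> ('x \<Rightarrow> ereal) \<Rightarrow> ('x \<Rightarrow> ereal) \<Rightarrow> 'x set \<Rightarrow> ('x wsp \<times> real) set" where
  "KS D f g A = (\<Inter>w\<in>edom D (cconj g). \<Union>z\<in>edom D (cconj (indf A)).
     case z of (xs, ys, a) \<Rightarrow> case w of (u, v, \<gamma>) \<Rightarrow>
     shiftW (epiW D (cconj (\<lambda>x. f x - cpl x (- xs, - ys, a))))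
       ((u, \<lambda>_. 0, 0), real_of_ereal (cconj g (u, v, \<gamma>) - cconj (indf A) (xs, ys, a))))"

end

theory Submission imports Defs begin

lemma lminus_simps[simp]:
  "lminus (ereal a) (ereal b) = ereal (a - b)"
  "lminus (ereal a) \<infinity> = -\<infinity>"
  "lminus (ereal a) (-\<infinity>) = \<infinity>"
  "lminus \<infinity> (ereal b) = \<infinity>"
  "lminus \<infinity> \<infinity> = -\<infinity>"
  "lminus \<infinity> (-\<infinity>) = \<infinity>"
  by (auto simp: lminus_def)

lemma cpl_eq: "cpl x (a, b, c) = (if b x < c then ereal (a x) else \<infinity>)"
  by (simp add: cpl_def)

lemma cconj_upper: "lminus (cpl x w) (h x) \<le> cconj h w"
  unfolding cconj_def by (rule SUP_upper) auto

lemma cconj_le_iff: "cconj h w \<le> r \<longleftrightarrow> (\<forall>x. lminus (cpl x w) (h x) \<le> r)"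
  unfolding cconj_def by (simp add: SUP_le_iff)

lemma cconj_nm:
  assumes "proper_fun h" shows "cconj h w \<noteq> -\<infinity>"
proof -
  obtain x0 where h1: "h x0 \<noteq> \<infinity>" "h x0 \<noteq> -\<infinity>" using assms unfolding proper_fun_def by blast
  then obtain t where t: "h x0 = ereal t" by (cases "h x0") auto
  obtain a b c where w: "w = (a,b,c)" by (cases w) auto
  have "lminus (cpl x0 w) (h x0) \<noteq> -\<infinity>" using t by (simp add: w cpl_eq lminus_def)
  moreover have "lminus (cpl x0 w) (h x0) \<le> cconj h w" by (rule cconj_upper)
  ultimately show ?thesis by auto
qed

lemma proper_indf: "A \<noteq> {} \<Longrightarrow> proper_fun (indf A)"
  unfolding proper_fun_def indf_def by auto

lemma shiftW_mem:
  "(((a,b,c),r) \<in> shiftW E ((a',b',c'),r')) \<longleftrightarrow> (((\<lambda>x. a x + a' x, \<lambda>x. b x + b' x, c+c'),r+r') \<in> E)"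
proof
  assume "((a,b,c),r) \<in> shiftW E ((a',b',c'),r')"
  then obtain a0 b0 c0 r0 where "((a0,b0,c0),r0) \<in> E" "a = a0 - a'" "b = b0 - b'" "c = c0 - c'" "r = r0 - r'"
    unfolding shiftW_def by force
  moreover have "(\<lambda>x. a x + a' x) = a0" "(\<lambda>x. b x + b' x) = b0" using calculation by (auto simp: fun_eq_iff)
  ultimately show "((\<lambda>x. a x + a' x, \<lambda>x. b x + b' x, c+c'),r+r') \<in> E" by simp
next
  assume "((\<lambda>x. a x + a' x, \<lambda>x. b x + b' x, c+c'),r+r') \<in> E"
  then show "((a,b,c),r) \<in> shiftW E ((a',b',c'),r')"
    unfolding shiftW_def by (rule rev_image_eqI) (simp add: fun_eq_iff)
qed

lemma ds_add: "dual_space D \<Longrightarrow> l \<in> D \<Longrightarrow> m \<in> D \<Longrightarrow> (\<lambda>x. l x + m x) \<in> D"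
  unfolding dual_space_def by auto
lemma ds_neg: "dual_space D \<Longrightarrow> l \<in> D \<Longrightarrow> - l \<in> D"
proof -
  assume "dual_space D" "l \<in> D"
  then have "(\<lambda>x. (-1) * l x) \<in> D" unfolding dual_space_def by blast
  moreover have "(\<lambda>x. (-1) * l x) = - l" by (simp add: fun_eq_iff)
  ultimately show ?thesis by simp
qed
lemma ds_zero: "dual_space D \<Longrightarrow> (\<lambda>_. 0) \<in> D"
  unfolding dual_space_def by auto


lemma fun_mm: "- (- p) = (p::'x \<Rightarrow> real)" by (simp add: fun_eq_iff)

lemma lminus_le_iff: "d \<noteq> -\<infinity> \<Longrightarrow> lminus (ereal s) d \<le> ereal r \<longleftrightarrow> -ereal r \<le> d + ereal (-s)"
  by (cases d) auto

locale setting =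
  fixes D :: "('x::real_vector \<Rightarrow> real) set" and f g :: "'x \<Rightarrow> ereal" and A :: "'x set"
  assumes dual: "dual_space D" and pf: "proper_fun f" and pg: "proper_fun g"
    and domfg: "\<forall>x. f x < \<infinity> \<longrightarrow> g x < \<infinity>" and An: "A \<noteq> {}"
    and H: "epiW D (cconj (\<lambda>x. f x - g x + indf A x)) \<inter> Bstar D = LambdaS D f g A \<inter> Bstar D"
begin

lemma f_nm: "f x \<noteq> -\<infinity>" using pf unfolding proper_fun_def by auto
lemma g_nm: "g x \<noteq> -\<infinity>" using pg unfolding proper_fun_def by auto
lemma fc_nm: "cconj f w \<noteq> -\<infinity>" by (rule cconj_nm[OF pf])
lemma gc_nm: "cconj g w \<noteq> -\<infinity>" by (rule cconj_nm[OF pg])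
lemma Ac_nm: "cconj (indf A) w \<noteq> -\<infinity>" by (rule cconj_nm[OF proper_indf[OF An]])

lemma gc_fin: "w \<in> edom D (cconj g) \<Longrightarrow> \<exists>G. cconj g w = ereal G"
  using gc_nm[of w] unfolding edom_def by (cases "cconj g w") auto
lemma Ac_fin: "z \<in> edom D (cconj (indf A)) \<Longrightarrow> \<exists>G. cconj (indf A) z = ereal G"
  using Ac_nm[of z] unfolding edom_def by (cases "cconj (indf A) z") auto

lemma phi_lt:
  assumes "w \<in> edom D (cconj g)" "z \<in> edom D (cconj (indf A))"
  shows "phi f g A p w z < \<infinity>"
proof -
  obtain u v c where w: "w = (u,v,c)" by (cases w) auto
  obtain xs ys a where z: "z = (xs,ys,a)" by (cases z) auto
  obtain G where G: "cconj g w = ereal G" using gc_fin assms by blast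
  obtain R where R: "cconj (indf A) z = ereal R" using Ac_fin assms by blast
  have "cconj f (u - xs - p, - ys, a) \<noteq> -\<infinity>" by (rule fc_nm)
  then show ?thesis using G R unfolding phi_def w z
    by (cases "cconj f (u - xs - p, - ys, a)") auto
qed

lemma phi_notdom:
  assumes "w \<in> edom D (cconj g)" "z \<in> Wsp D" "z \<notin> edom D (cconj (indf A))"
  shows "phi f g A p w z = -\<infinity>"
proof -
  obtain u v c where w: "w = (u,v,c)" by (cases w) auto
  obtain xs ys a where z: "z = (xs,ys,a)" by (cases z) auto
  obtain G where G: "cconj g w = ereal G" using gc_fin assms by blast
  have R: "cconj (indf A) z = \<infinity>" using assms(2,3) unfolding edom_def by auto
  have "cconj f (u - xs - p, - ys, a) \<noteq> -\<infinity>" by (rule fc_nm)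
  then show ?thesis using G R unfolding phi_def w z
    by (cases "cconj f (u - xs - p, - ys, a)") auto
qed

lemma fg_nm: "f x - g x \<noteq> -\<infinity>"
  using domfg f_nm[of x] g_nm[of x] by (cases "f x"; cases "g x") auto

lemma F1:
  assumes "xs \<in> D" "0 < a"
  shows "(((xs, \<lambda>_. 0, a), r) \<in> epiW D (cconj (\<lambda>x. f x - g x + indf A x))) \<longleftrightarrow> -ereal r \<le> vP f g A (-xs)"
proof -
  have W: "(xs, \<lambda>_. 0, a) \<in> Wsp D" using ds_zero[OF dual] assms by (simp add: Wsp_def)
  have "(((xs, \<lambda>_. 0, a), r) \<in> epiW D (cconj (\<lambda>x. f x - g x + indf A x))) \<longleftrightarrow>
     (\<forall>x. lminus (ereal (xs x)) (f x - g x + indf A x) \<le> ereal r)"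
    by (simp add: epiW_def W cconj_le_iff cpl_eq assms)
  also have "\<dots> \<longleftrightarrow> (\<forall>x\<in>A. -ereal r \<le> f x - g x + ereal (- xs x))"
  proof -
    have "lminus (ereal (xs x)) (f x - g x + indf A x) \<le> ereal r \<longleftrightarrow> (x \<in> A \<longrightarrow> -ereal r \<le> f x - g x + ereal (- xs x))" for x
    proof (cases "x \<in> A")
      case True
      then show ?thesis using lminus_le_iff[OF fg_nm[of x]] by (simp add: indf_def)
    next
      case False
      have "f x - g x + \<infinity> = \<infinity>" using fg_nm[of x] by simp
      then show ?thesis using False by (simp add: indf_def)
    qed
    then show ?thesis by auto
  qed
  also have "\<dots> \<longleftrightarrow> -ereal r \<le> vP f g A (-xs)"
    by (simp add: vP_def le_INF_iff)
  finally show ?thesis .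
qed


lemma cconj_shift_eq:
  "cconj (\<lambda>x. f x - cpl x (- xs', - ys', a')) (\<lambda>x. xs x + u x, \<lambda>_. 0, a) = cconj f (u - xs' - (- xs), - ys', a')"
  if "0 < a"
  unfolding cconj_def
proof (rule SUP_cong[OF refl])
  fix x
  show "lminus (cpl x (\<lambda>x. xs x + u x, \<lambda>_. 0, a)) (f x - cpl x (- xs', - ys', a')) =
        lminus (cpl x (u - xs' - - xs, - ys', a')) (f x)"
    using f_nm[of x] that by (cases "f x") (auto simp: cpl_eq lminus_def)
qed

lemma F2:
  assumes "xs \<in> D" "0 < a" "z \<in> edom D (cconj (indf A))" "w \<in> edom D (cconj g)"
  shows "(((xs, \<lambda>_. 0, a), r) \<in> (case z of (xs', ys', a') \<Rightarrow> case w of (u, v, \<gamma>) \<Rightarrow>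
     shiftW (epiW D (cconj (\<lambda>x. f x - cpl x (- xs', - ys', a'))))
       ((u, \<lambda>_. 0, 0), real_of_ereal (cconj g (u, v, \<gamma>) - cconj (indf A) (xs', ys', a')))))
    \<longleftrightarrow> -ereal r \<le> phi f g A (-xs) w z"
proof -
  obtain u v c where w: "w = (u,v,c)" by (cases w) auto
  obtain xs' ys' a' where z: "z = (xs',ys',a')" by (cases z) auto
  obtain G where G: "cconj g w = ereal G" using gc_fin assms by blast
  obtain R where R: "cconj (indf A) z = ereal R" using Ac_fin assms by blast
  have uD: "u \<in> D" using assms(4) unfolding w edom_def Wsp_def by auto
  have sD: "(\<lambda>x. xs x + u x) \<in> D" by (rule ds_add[OF dual assms(1) uD])
  have fn: "cconj f (u - xs' - (- xs), - ys', a') \<noteq> -\<infinity>" by (rule fc_nm)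
  show ?thesis
    unfolding w z using G R fn
    apply (simp add: shiftW_mem epiW_def Wsp_def sD ds_zero[OF dual] cconj_shift_eq[OF assms(2)] phi_def w z)
    apply (cases "cconj f (u - xs' - (- xs), - ys', a')")
      apply auto
    done
qed

lemma KB:
  assumes "xs \<in> D" "0 < a" "\<forall>w\<in>edom D (cconj g). \<exists>z\<in>edom D (cconj (indf A)). -ereal r \<le> phi f g A (-xs) w z"
  shows "((xs, \<lambda>_. 0, a), r) \<in> LambdaS D f g A"
  unfolding LambdaS_def
proof (rule INT_I)
  fix w assume wd: "w \<in> edom D (cconj g)"
  obtain u v c where w: "w = (u,v,c)" by (cases w) auto
  obtain z where zd: "z \<in> edom D (cconj (indf A))" and zr: "-ereal r \<le> phi f g A (-xs) w z"
    using assms(3) wd by blast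
  obtain xs' ys' a' where z: "z = (xs',ys',a')" by (cases z) auto
  obtain G where G: "cconj g w = ereal G" using gc_fin wd by blast
  obtain R where R: "cconj (indf A) z = ereal R" using Ac_fin zd by blast
  have uD: "u \<in> D" using wd unfolding w edom_def Wsp_def by auto
  have sD: "(\<lambda>x. xs x + u x) \<in> D" by (rule ds_add[OF dual assms(1) uD])
  define Fc where "Fc = cconj f (u - xs' - (- xs), - ys', a')"
  have fn: "Fc \<noteq> -\<infinity>" unfolding Fc_def by (rule fc_nm)
  have zr': "-ereal r \<le> ereal G - Fc - ereal R" using zr G R unfolding phi_def w z Fc_def by simp
  have "Fc \<noteq> \<infinity>" using zr' by auto
  with fn obtain F where F: "Fc = ereal F" by (cases Fc) auto
  have key: "lminus (cpl x (\<lambda>x. xs x + u x, \<lambda>x. 0, a)) (f x + indf A x) \<le> ereal (r + G)" for x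
  proof (cases "x \<in> A \<and> f x \<noteq> \<infinity>")
    case False
    have e: "f x + indf A x = \<infinity>" using False f_nm[of x] by (auto simp: indf_def)
    show ?thesis by (simp add: e cpl_eq assms(2))
  next
    case True
    then obtain t where t: "f x = ereal t" using f_nm[of x] by (cases "f x") auto
    have "lminus (cpl x z) (indf A x) \<le> ereal R" using cconj_upper[of x z "indf A"] R by simp
    then have r1: "ys' x < a'" "xs' x \<le> R" using True unfolding z by (auto simp: cpl_eq indf_def lminus_def zero_ereal_def split: if_splits)
    have "lminus (cpl x (u - xs' - (- xs), - ys', a')) (f x) \<le> ereal F"
      using cconj_upper[of x "(u - xs' - (- xs), - ys', a')" f] F unfolding Fc_def by simp
    then have r2: "u x - xs' x + xs x - t \<le> F" using t by (auto simp: cpl_eq split: if_splits)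
    have r3: "- r \<le> G - F - R" using zr' F by simp
    show ?thesis using True t assms(2) r1 r2 r3 by (simp add: cpl_eq indf_def)
  qed
  show "((xs, \<lambda>_. 0, a), r) \<in> (case w of (u, v, \<gamma>) \<Rightarrow>
     shiftW (epiW D (cconj (\<lambda>x. f x + indf A x))) ((u, \<lambda>_. 0, 0), real_of_ereal (cconj g (u, v, \<gamma>))))"
    using G key unfolding w
    by (simp add: shiftW_mem epiW_def Wsp_def sD ds_zero[OF dual] cconj_le_iff w)
qed


lemma z0: "(\<lambda>_. 0, \<lambda>_. 0, 1) \<in> edom D (cconj (indf A))" "(\<lambda>_. 0, \<lambda>_. 0, 1) \<in> Zsp D"
proof -
  have "cconj (indf A) (\<lambda>_. 0, \<lambda>_. 0, 1) \<le> 0"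
    unfolding cconj_le_iff by (auto simp: cpl_eq indf_def lminus_def zero_ereal_def)
  then show "(\<lambda>_. 0, \<lambda>_. 0, 1) \<in> edom D (cconj (indf A))"
    using ds_zero[OF dual] by (auto simp: edom_def Wsp_def)
  show "(\<lambda>_. 0, \<lambda>_. 0, 1) \<in> Zsp D" using ds_zero[OF dual] by (auto simp: Zsp_def)
qed

lemma weak1: "vD D f g A p \<le> vDbar D f g A p"
  unfolding vD_def vDbar_def
  by (rule SUP_least, rule INF_greatest, rule order_trans[OF INF_lower SUP_upper]) auto

lemma KB':
  assumes "p \<in> D" "\<forall>w\<in>edom D (cconj g). \<exists>z\<in>edom D (cconj (indf A)). -ereal r \<le> phi f g A p w z"
  shows "-ereal r \<le> vP f g A p"
proof -
  have nD: "-p \<in> D" by (rule ds_neg[OF dual assms(1)])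
  have "((-p, \<lambda>_. 0, 1), r) \<in> LambdaS D f g A" using KB[OF nD, of 1 r] assms(2) by (simp add: fun_mm)
  moreover have "((-p, \<lambda>_. 0, 1), r) \<in> Bstar D" using nD by (simp add: Bstar_def)
  ultimately have "((-p, \<lambda>_. 0, 1), r) \<in> epiW D (cconj (\<lambda>x. f x - g x + indf A x))" using H by blast
  then show ?thesis using F1[OF nD, of 1 r] by (simp add: fun_mm)
qed

lemma weak2: assumes "p \<in> D" shows "vDbar D f g A p \<le> vP f g A p"
proof (rule ccontr)
  assume "\<not> ?thesis"
  then have "vP f g A p < vDbar D f g A p" by simp
  then obtain s where s: "vP f g A p < ereal s" "ereal s < vDbar D f g A p" using ereal_dense2 by blast
  have "\<forall>w\<in>edom D (cconj g). \<exists>z\<in>edom D (cconj (indf A)). -ereal (-s) \<le> phi f g A p w z"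
  proof
    fix w assume wd: "w \<in> edom D (cconj g)"
    have "ereal s < (SUP z\<in>Zsp D. phi f g A p w z)"
      using s(2) wd unfolding vDbar_def by (meson INF_lower less_le_trans)
    then obtain z where z: "z \<in> Zsp D" "ereal s < phi f g A p w z" by (auto simp: less_SUP_iff)
    have "z \<in> Wsp D" using z(1) by (auto simp: Zsp_def Wsp_def)
    have "z \<in> edom D (cconj (indf A))"
    proof (rule ccontr)
      assume "z \<notin> edom D (cconj (indf A))"
      then have "phi f g A p w z = -\<infinity>" using phi_notdom[OF wd \<open>z \<in> Wsp D\<close>] by blast
      then show False using z(2) by simp
    qed
    then show "\<exists>z\<in>edom D (cconj (indf A)). -ereal (-s) \<le> phi f g A p w z" using z(2) less_imp_le by auto
  qed
  from KB'[OF assms this] s(1) show False by simp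
qed

lemma Om_iff:
  assumes "xs \<in> D" "0 < a"
  shows "((xs, \<lambda>_. 0, a), r) \<in> OmegaS D f g A \<longleftrightarrow>
    (\<exists>z\<in>edom D (cconj (indf A)). \<forall>w\<in>edom D (cconj g). -ereal r \<le> phi f g A (-xs) w z)"
  unfolding OmegaS_def UN_iff INT_iff
  by (rule bex_cong[OF refl], rule ball_cong[OF refl], rule F2[OF assms]; assumption)

lemma K_iff:
  assumes "xs \<in> D" "0 < a"
  shows "((xs, \<lambda>_. 0, a), r) \<in> KS D f g A \<longleftrightarrow>
    (\<forall>w\<in>edom D (cconj g). \<exists>z\<in>edom D (cconj (indf A)). -ereal r \<le> phi f g A (-xs) w z)"
  unfolding KS_def UN_iff INT_iff
  by (rule ball_cong[OF refl], rule bex_cong[OF refl], rule F2[OF assms]; assumption)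

lemma Om_sub_K: "OmegaS D f g A \<subseteq> KS D f g A"
proof -
  have UI: "(\<Union>x\<in>X. \<Inter>y\<in>Y. F x y) \<subseteq> (\<Inter>y\<in>Y. \<Union>x\<in>X. F x y)" for X Y and F :: "'b \<Rightarrow> 'c \<Rightarrow> 'd set" by blast
  show ?thesis unfolding OmegaS_def KS_def by (rule UI)
qed

lemma Bstar_cases: "pt \<in> Bstar D \<Longrightarrow> (\<And>xs a r. pt = ((xs, \<lambda>_. 0, a), r) \<Longrightarrow> xs \<in> D \<Longrightarrow> 0 < a \<Longrightarrow> P) \<Longrightarrow> P"
  unfolding Bstar_def by auto

end

theorem theorem6p6:
  fixes D :: "('x::real_vector \<Rightarrow> real) set"
    and f g :: "'x \<Rightarrow> ereal" and A :: "'x set"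
  assumes "dual_space D" and "\<exists>x::'x. x \<noteq> 0"
    and "proper_fun f" and "convex_fun f" and "proper_fun g" and "convex_fun g"
    and "\<forall>x. f x < \<infinity> \<longrightarrow> g x < \<infinity>"
    and "A \<noteq> {}"
    and "epiW D (cconj (\<lambda>x. f x - g x + indf A x)) \<inter> Bstar D = LambdaS D f g A \<inter> Bstar D"
  shows "stable_D D f g A \<longleftrightarrow>
           (stable_Dbar D f g A \<and> OmegaS D f g A \<inter> Bstar D = KS D f g A \<inter> Bstar D)"
proof -
  interpret S: setting D f g A
    by (rule setting.intro) (use assms in auto)
  let ?dg = "edom D (cconj g)" and ?dA = "edom D (cconj (indf A))"
  show ?thesis
  proof
    assume i: "stable_D D f g A"
    have sd: "vP f g A p = vD D f g A p \<and> (\<exists>z\<in>?dA. \<forall>w\<in>?dg. vD D f g A p \<le> phi f g A p w z)"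
      if "p \<in> D" for p
      using i that unfolding stable_D_def strong_D_def by blast
    have "stable_Dbar D f g A"
      unfolding stable_Dbar_def strong_Dbar_def
    proof
      fix p assume pD: "p \<in> D"
      have e: "vDbar D f g A p = vD D f g A p" "vP f g A p = vD D f g A p"
        using sd[OF pD] S.weak1[of p] S.weak2[OF pD] by auto
      show "vP f g A p = vDbar D f g A p \<and> (\<forall>w\<in>?dg. \<exists>z\<in>?dA. vDbar D f g A p \<le> phi f g A p w z)"
        using sd[OF pD] e by metis
    qed
    moreover have "OmegaS D f g A \<inter> Bstar D = KS D f g A \<inter> Bstar D"
    proof
      show "OmegaS D f g A \<inter> Bstar D \<subseteq> KS D f g A \<inter> Bstar D" using S.Om_sub_K by blast
      show "KS D f g A \<inter> Bstar D \<subseteq> OmegaS D f g A \<inter> Bstar D"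
      proof
        fix pt assume pt: "pt \<in> KS D f g A \<inter> Bstar D"
        then obtain xs a r where pe: "pt = ((xs, \<lambda>_. 0, a), r)" and xs: "xs \<in> D" and a: "0 < a"
          using S.Bstar_cases by blast
        have nD: "-xs \<in> D" by (rule ds_neg[OF assms(1) xs])
        have "\<forall>w\<in>?dg. \<exists>z\<in>?dA. -ereal r \<le> phi f g A (-xs) w z"
          using pt S.K_iff[OF xs a] pe by blast
        then have le: "-ereal r \<le> vP f g A (-xs)" by (rule S.KB'[OF nD])
        obtain z where z: "z \<in> ?dA" "\<forall>w\<in>?dg. vD D f g A (-xs) \<le> phi f g A (-xs) w z"
          using sd[OF nD] by blast
        have "\<forall>w\<in>?dg. -ereal r \<le> phi f g A (-xs) w z"
          using z(2) le sd[OF nD] by (metis order_trans)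
        then have "pt \<in> OmegaS D f g A" using S.Om_iff[OF xs a] z(1) pe by blast
        then show "pt \<in> OmegaS D f g A \<inter> Bstar D" using pt by blast
      qed
    qed
    ultimately show "stable_Dbar D f g A \<and> OmegaS D f g A \<inter> Bstar D = KS D f g A \<inter> Bstar D" by blast
  next
    assume ii: "stable_Dbar D f g A \<and> OmegaS D f g A \<inter> Bstar D = KS D f g A \<inter> Bstar D"
    show "stable_D D f g A"
      unfolding stable_D_def strong_D_def
    proof
      fix p assume pD: "p \<in> D"
      have nD: "-p \<in> D" by (rule ds_neg[OF assms(1) pD])
      have sb: "vP f g A p = vDbar D f g A p" "\<forall>w\<in>?dg. \<exists>z\<in>?dA. vDbar D f g A p \<le> phi f g A p w z"
        using ii pD unfolding stable_Dbar_def strong_Dbar_def by blast+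
      have w12: "vD D f g A p \<le> vP f g A p" using S.weak1[of p] S.weak2[OF pD] by simp
      show "vP f g A p = vD D f g A p \<and> (\<exists>z\<in>?dA. \<forall>w\<in>?dg. vD D f g A p \<le> phi f g A p w z)"
      proof (cases "?dg = {}")
        case True
        have "vD D f g A p = \<infinity>" unfolding vD_def True proof -
          have ne: "Zsp D \<noteq> {}" using S.z0(2) by blast
          show "(SUP z\<in>Zsp D. INF w\<in>{}. phi f g A p w z) = \<infinity>"
            using ne by simp (rule top_ereal_def)
        qed
        moreover have "vDbar D f g A p = \<infinity>" unfolding vDbar_def True by simp (rule top_ereal_def)
        ultimately show ?thesis using sb(1) S.z0(1) True by auto
      next
        case False
        then obtain w0 where w0: "w0 \<in> ?dg" by blast
        show ?thesis
        proof (cases "vP f g A p")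
          case PInf
          then obtain z where "z \<in> ?dA" "vDbar D f g A p \<le> phi f g A p w0 z" using sb w0 by blast
          then show ?thesis using S.phi_lt[OF w0, of z p] sb(1) PInf by auto
        next
          case MInf
          then show ?thesis using w12 S.z0(1) by auto
        next
          case (real v)
          have "\<forall>w\<in>?dg. \<exists>z\<in>?dA. -ereal (-v) \<le> phi f g A (- (- p)) w z"
            using sb real by (simp add: fun_mm)
          then have "((-p, \<lambda>_. 0, 1), -v) \<in> KS D f g A" using S.K_iff[OF nD, of 1 "-v"] by simp
          moreover have "((-p, \<lambda>_. 0, 1), -v) \<in> Bstar D" using nD by (simp add: Bstar_def)
          ultimately have "((-p, \<lambda>_. 0, 1), -v) \<in> OmegaS D f g A" using ii by blast
          then obtain z where zd: "z \<in> ?dA" and zw: "\<forall>w\<in>?dg. ereal v \<le> phi f g A p w z"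
            using S.Om_iff[OF nD, of 1 "-v"] by (auto simp: fun_mm)
          obtain xs' ys' a' where z: "z = (xs',ys',a')" by (cases z) auto
          have xys: "xs' \<in> D" "ys' \<in> D" using zd unfolding z edom_def Wsp_def by auto
          have apos: "0 < a'"
          proof -
            have "vP f g A p < \<infinity>" using real by simp
            then obtain x where xA: "x \<in> A" and lt: "f x - g x + ereal (p x) < \<infinity>"
              unfolding vP_def INF_less_iff by blast
            have fx: "f x \<noteq> \<infinity>" using lt by auto
            obtain t where t: "f x = ereal t" using fx S.f_nm[of x] by (cases "f x") auto
            obtain R where R: "cconj (indf A) z = ereal R" using S.Ac_fin zd by blast
            have "lminus (cpl x z) (indf A x) \<le> ereal R" using cconj_upper[of x z "indf A"] R by simp
            then have c1: "ys' x < a'" using xA unfolding z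
              by (auto simp: cpl_eq indf_def lminus_def zero_ereal_def split: if_splits)
            obtain u vv cc where w: "w0 = (u,vv,cc)" by (cases w0) auto
            obtain G where G: "cconj g w0 = ereal G" using S.gc_fin w0 by blast
            define Fc where "Fc = cconj f (u - xs' - p, - ys', a')"
            have "ereal v \<le> phi f g A p w0 z" using zw w0 by blast
            then have "ereal v \<le> ereal G - Fc - ereal R" using G R by (simp add: phi_def w z Fc_def)
            then have "Fc \<noteq> \<infinity>" by (cases Fc) auto
            moreover have "lminus (cpl x (u - xs' - p, - ys', a')) (f x) \<le> Fc"
              unfolding Fc_def by (rule cconj_upper)
            ultimately have c2: "- ys' x < a'" using t by (auto simp: cpl_eq split: if_splits)
            show ?thesis using c1 c2 by linarith
          qed
          have zZ: "z \<in> Zsp D" using xys apos unfolding z Zsp_def by auto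
          have "ereal v \<le> vD D f g A p" unfolding vD_def
            by (rule order_trans[OF _ SUP_upper[OF zZ]]) (rule INF_greatest, use zw in auto)
          then have e: "vD D f g A p = vP f g A p" using w12 real by auto
          show ?thesis using e real zd zw by auto
        qed
      qed
    qed
  qed
qed

end
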